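(* Let $r \ge 2$ be such that $p_{r+1}^2 \ge p_r\#/2$. Then $$\max\{\,p_{r+1}-1,\ d(p_{r+1}^2)\,\} = 2p_{r-1}.$$
   Context: $p_k$ denotes the $k$-th prime ($p_1=2$, $p_2=3$, \dots). For a prime $p$, $p\# = \prod_{q\le p,\ q \text{ prime}} q$. For $r \ge 1$, $d(p_{r+1}^2)$ denotes the maximum of $q'-q$ over all pairs of consecutive primes $q<q'$ with $p_{r+1} \le q < q' \le p_{r+1}^2$ (equivalently, the maximum gap between consecutive integers coprime to $p_r\#$ lying in the interval $[p_{r+1}, p_{r+1}^2]$). *)

theory Defs
  imports "HOL-Computational_Algebra.Primes" "HOL-Library.Infinite_Set"
begin

text \<open>The k-th prime, 1-indexed: nth_prime 1 = 2, nth_prime 2 = 3, ...\<close>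
definition nth_prime :: "nat \<Rightarrow> nat" where
  "nth_prime k = enumerate {p::nat. prime p} (k - 1)"

definition primorial :: "nat \<Rightarrow> nat" where
  "primorial p = (\<Prod>q\<in>{q::nat. prime q \<and> q \<le> p}. q)"

definition max_prime_gap :: "nat \<Rightarrow> nat \<Rightarrow> nat" where
  "max_prime_gap a b = Max {q' - q | q q'. prime q \<and> prime q' \<and> a \<le> q \<and> q < q' \<and> q' \<le> b
       \<and> (\<forall>s. q < s \<and> s < q' \<longrightarrow> \<not> prime s)}"

text \<open>d(p_{r+1}^2) with lower endpoint p_{r+1}.\<close>
definition d_gap :: "nat \<Rightarrow> nat" where
  "d_gap r = max_prime_gap (nth_prime (r+1)) ((nth_prime (r+1))^2)"

end

theory Submission
  imports Defs
begin

lemma infP: "infinite {p::nat. prime p}" using primes_infinite by simp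

lemma np_prime: "prime (nth_prime k)"
  unfolding nth_prime_def using enumerate_in_set[OF infP] by simp

lemma np_mono: "1 \<le> i \<Longrightarrow> i < j \<Longrightarrow> nth_prime i < nth_prime j"
  unfolding nth_prime_def by (simp add: enumerate_mono_iff[OF infP])

lemma np_mono_iff: "1 \<le> i \<Longrightarrow> 1 \<le> j \<Longrightarrow> nth_prime i < nth_prime j \<longleftrightarrow> i < j"
  unfolding nth_prime_def by (simp add: enumerate_mono_iff[OF infP]) linarith

lemma np_mono_le_iff: "1 \<le> i \<Longrightarrow> 1 \<le> j \<Longrightarrow> nth_prime i \<le> nth_prime j \<longleftrightarrow> i \<le> j"
  unfolding nth_prime_def by (simp add: enumerate_mono_le_iff[OF infP]) linarith

lemma np_Ex: "prime q \<Longrightarrow> \<exists>k\<ge>1. nth_prime k = q"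
proof -
  assume "prime q"
  then obtain n where "enumerate {p::nat. prime p} n = q" using enumerate_Ex[OF infP] by auto
  then show ?thesis by (intro exI[of _ "Suc n"]) (simp add: nth_prime_def)
qed

lemma np_1: "nth_prime 1 = 2"
proof -
  have "(LEAST n::nat. prime n) = 2"
    by (rule Least_equality) (auto simp: prime_ge_2_nat)
  then show ?thesis unfolding nth_prime_def by (simp add: enumerate_0)
qed

lemma np_step:
  assumes "k \<ge> 1" "nth_prime k = a" "prime b" "a < b" "\<forall>s\<in>{a<..<b}. \<not> prime s"
  shows "nth_prime (Suc k) = b"
proof -
  obtain j where j: "j \<ge> 1" "nth_prime j = b" using np_Ex assms(3) by blast
  have "k < j" using np_mono_iff[OF assms(1) j(1)] assms j by simp
  moreover have "\<not> Suc k < j"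
  proof
    assume "Suc k < j"
    then have "nth_prime (Suc k) < b" "a < nth_prime (Suc k)"
      using np_mono[of "Suc k" j] np_mono[of k "Suc k"] assms j by auto
    then show False using assms(5) np_prime[of "Suc k"] by auto
  qed
  ultimately show ?thesis using j by (metis Suc_lessI)
qed

lemma np_2: "nth_prime 2 = 3"
proof -
  have "prime (3::nat)" "\<forall>s\<in>{2<..<3::nat}. \<not> prime s" by code_simp+
  then show ?thesis using np_step[of 1 2 3] np_1 by (simp add: numeral_eq_Suc)
qed
lemma np_3: "nth_prime 3 = 5"
proof -
  have "prime (5::nat)" "\<forall>s\<in>{3<..<5::nat}. \<not> prime s" by code_simp+
  then show ?thesis using np_step[of 2 3 5] np_2 by (simp add: numeral_eq_Suc)
qed

lemma np_4: "nth_prime 4 = 7"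
proof -
  have "prime (7::nat)" "\<forall>s\<in>{5<..<7::nat}. \<not> prime s" by code_simp+
  then show ?thesis using np_step[of 3 5 7] np_3 by (simp add: numeral_eq_Suc)
qed

lemma np_5: "nth_prime 5 = 11"
proof -
  have "prime (11::nat)" "\<forall>s\<in>{7<..<11::nat}. \<not> prime s" by code_simp+
  then show ?thesis using np_step[of 4 7 11] np_4 by (simp add: numeral_eq_Suc)
qed

lemma np_6: "nth_prime 6 = 13"
proof -
  have "prime (13::nat)" "\<forall>s\<in>{11<..<13::nat}. \<not> prime s" by code_simp+
  then show ?thesis using np_step[of 5 11 13] np_5 by (simp add: numeral_eq_Suc)
qed

lemma np_7: "nth_prime 7 = 17"
proof -
  have "prime (17::nat)" "\<forall>s\<in>{13<..<17::nat}. \<not> prime s" by code_simp+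
  then show ?thesis using np_step[of 6 13 17] np_6 by (simp add: numeral_eq_Suc)
qed

lemma np_8: "nth_prime 8 = 19"
proof -
  have "prime (19::nat)" "\<forall>s\<in>{17<..<19::nat}. \<not> prime s" by code_simp+
  then show ?thesis using np_step[of 7 17 19] np_7 by (simp add: numeral_eq_Suc)
qed

lemma np_9: "nth_prime 9 = 23"
proof -
  have "prime (23::nat)" "\<forall>s\<in>{19<..<23::nat}. \<not> prime s" by code_simp+
  then show ?thesis using np_step[of 8 19 23] np_8 by (simp add: numeral_eq_Suc)
qed

lemma np_10: "nth_prime 10 = 29"
proof -
  have "prime (29::nat)" "\<forall>s\<in>{23<..<29::nat}. \<not> prime s" by code_simp+
  then show ?thesis using np_step[of 9 23 29] np_9 by (simp add: numeral_eq_Suc)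
qed

lemma np_11: "nth_prime 11 = 31"
proof -
  have "prime (31::nat)" "\<forall>s\<in>{29<..<31::nat}. \<not> prime s" by code_simp+
  then show ?thesis using np_step[of 10 29 31] np_10 by (simp add: numeral_eq_Suc)
qed


lemma np_lower: "i \<ge> 1 \<Longrightarrow> 2*i - 1 \<le> nth_prime i"
proof (induction i rule: nat_induct_at_least)
  case base then show ?case using np_1 by simp
next
  case (Suc n)
  show ?case
  proof (cases "n = 1")
    case True then show ?thesis using np_2 by (simp add: numeral_2_eq_2)
  next
    case False
    then have n2: "n \<ge> 2" using Suc by simp
    have "nth_prime n \<ge> 3" using np_mono_le_iff[of 2 n] n2 np_2 by simp
    moreover have "nth_prime n < nth_prime (Suc n)" using np_mono[of n "Suc n"] Suc by simp
    ultimately have "odd (nth_prime n)" "odd (nth_prime (Suc n))"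
      using prime_odd_nat np_prime by auto
    then have "nth_prime n + 2 \<le> nth_prime (Suc n)" using \<open>nth_prime n < nth_prime (Suc n)\<close>
      by (metis Suc_leI add_2_eq_Suc' even_Suc le_antisym not_less_eq_eq)
    then show ?thesis using Suc by simp
  qed
qed

lemma np_pos: "nth_prime i > 0" using np_prime[of i] prime_gt_0_nat by blast

lemma primorial_np: "r \<ge> 1 \<Longrightarrow> primorial (nth_prime r) = (\<Prod>i\<in>{1..r}. nth_prime i)"
proof -
  assume r1: "r \<ge> 1"
  have eq: "{q. prime q \<and> q \<le> nth_prime r} = nth_prime ` {1..r}"
  proof
    show "{q. prime q \<and> q \<le> nth_prime r} \<subseteq> nth_prime ` {1..r}"
    proof
      fix q assume q: "q \<in> {q. prime q \<and> q \<le> nth_prime r}"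
      then obtain k where k: "k \<ge> 1" "nth_prime k = q" using np_Ex by blast
      have "k \<le> r" using np_mono_le_iff[of k r] k q r1 by simp
      then show "q \<in> nth_prime ` {1..r}" using k by auto
    qed
  next
    show "nth_prime ` {1..r} \<subseteq> {q. prime q \<and> q \<le> nth_prime r}"
      using np_prime np_mono_le_iff by auto
  qed
  have inj: "inj_on nth_prime {1..r}"
    by (rule inj_onI) (metis atLeastAtMost_iff linorder_neqE_nat np_mono less_irrefl)
  show ?thesis unfolding primorial_def eq using prod.reindex[OF inj, of id] by simp
qed

lemma prod_split: "k \<le> r \<Longrightarrow> (\<Prod>i\<in>{1..r}. nth_prime i) = (\<Prod>i\<in>{1..k}. nth_prime i) * (\<Prod>i\<in>{k+1..r}. nth_prime i)"
proof -
  assume "k \<le> r"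
  then have "{1..r} = {1..k} \<union> {k+1..r}" by auto
  moreover have "{1..k} \<inter> {k+1..r} = {}" by auto
  ultimately show ?thesis by (simp add: prod.union_disjoint)
qed
lemma prime_dvd_Q:
  assumes "prime p" "p dvd (\<Prod>i\<in>{1..k}. nth_prime i)"
  shows "\<exists>j\<in>{1..k}. p = nth_prime j"
proof -
  from assms obtain j where "j \<in> {1..k}" "p dvd nth_prime j"
    using prime_dvd_prod_iff[of "{1..k}" p nth_prime] by auto
  then show ?thesis using primes_dvd_imp_eq[OF assms(1) np_prime] by blast
qed

lemma key:
  assumes k2: "k \<ge> 2" and kr: "k < r" and ma: "r - k + 1 \<le> nth_prime (k+1)"
  shows "nth_prime (r+1) < (\<Prod>i\<in>{1..k}. nth_prime i) * (r - k + 1)"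
proof -
  define Q where "Q = (\<Prod>i\<in>{1..k}. nth_prime i)"
  define m where "m = r - k + 1"
  have Q6: "Q \<ge> 6"
  proof -
    have "Q = (\<Prod>i\<in>{1..2}. nth_prime i) * (\<Prod>i\<in>{2+1..k}. nth_prime i)"
      unfolding Q_def using prod_split[of 2 k] k2 by simp
    moreover have "(\<Prod>i\<in>{1..2::nat}. nth_prime i) = 6"
      using np_1 np_2 by (simp add: numeral_2_eq_2)
    moreover have "(\<Prod>i\<in>{2+1..k}. nth_prime i) \<ge> 1"
      using np_pos by (simp add: Suc_le_eq prod_pos)
    ultimately show ?thesis by simp
  qed
  define N where "N i = Q * i - 1" for i
  define f where "f i = (SOME p. prime p \<and> p dvd N i)" for i
  have N2: "N i \<ge> 5" if "i \<ge> 1" for i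
  proof -
    have "Q * i \<ge> Q" using that by simp
    then show ?thesis unfolding N_def using Q6 by linarith
  qed
  have f: "prime (f i) \<and> f i dvd N i" if "i \<ge> 1" for i
  proof -
    have "N i \<noteq> 1" using N2[OF that] by simp
    then have "\<exists>p. prime p \<and> p dvd N i" by (rule prime_factor_nat)
    then show ?thesis unfolding f_def by (rule someI_ex)
  qed
  have nQ: "\<not> f i dvd Q" if "i \<ge> 1" for i
  proof
    assume "f i dvd Q"
    then have "f i dvd Q * i" by simp
    moreover have "f i dvd Q * i - 1" using f[OF that] unfolding N_def by simp
    ultimately have "f i dvd Q * i - (Q * i - 1)" by (rule dvd_diff_nat)
    moreover have "Q * i - (Q * i - 1) = 1" using N2[OF that] unfolding N_def by simp
    ultimately show False using f[OF that] by simp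
  qed
  have fbig: "\<exists>j\<ge>k+1. f i = nth_prime j" if i1: "i \<ge> 1" for i
  proof -
    obtain j where j: "j \<ge> 1" "nth_prime j = f i" using np_Ex f[OF i1] by blast
    have "\<not> j \<le> k"
    proof
      assume "j \<le> k"
      then have "nth_prime j dvd Q" unfolding Q_def using j by (intro dvd_prodI) auto
      then show False using nQ[OF i1] j by simp
    qed
    then have "j \<ge> k+1" by simp
    then show ?thesis using j by metis
  qed
  have fge: "f i \<ge> m" if i1: "i \<ge> 1" for i
  proof -
    obtain j where "j \<ge> k+1" "f i = nth_prime j" using fbig[OF i1] by blast
    then have "f i \<ge> nth_prime (k+1)" using np_mono_le_iff[of "k+1" j] by simp
    then show ?thesis using ma m_def by simp
  qed
  have inj: "inj_on f {1..m}"
  proof (rule inj_onI)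
    fix i i' assume ii: "i \<in> {1..m}" "i' \<in> {1..m}" "f i = f i'"
    show "i = i'"
    proof (rule ccontr)
      assume ne: "i \<noteq> i'"
      {
        fix a b assume ab: "a \<in> {1..m}" "b \<in> {1..m}" "f a = f b" "a < b"
        have "f a dvd N b - N a" using f[of a] f[of b] ab by (simp add: dvd_diff_nat)
        moreover have "N b - N a = Q * (b - a)"
          using N2[of a] N2[of b] ab unfolding N_def by (simp add: diff_mult_distrib2)
        ultimately have "f a dvd Q * (b - a)" by simp
        then have "f a dvd (b - a)" using f[of a] nQ[of a] ab prime_dvd_mult_iff by auto
        then have "f a \<le> b - a" using ab by (simp add: dvd_imp_le)
        moreover have "f a \<ge> m" using fge ab by simp
        ultimately have False using ab by auto
      }
      then show False using ii ne by (metis linorder_neqE_nat)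
    qed
  qed
  obtain i where i: "i \<in> {1..m}" "f i > nth_prime r"
  proof (rule ccontr)
    assume "\<not> thesis"
    then have le: "\<forall>i\<in>{1..m}. f i \<le> nth_prime r" using that by force
    have "f ` {1..m} \<subseteq> nth_prime ` {k+1..r}"
    proof
      fix x assume "x \<in> f ` {1..m}"
      then obtain i where i: "i \<in> {1..m}" "x = f i" by auto
      obtain j where j: "j \<ge> k+1" "f i = nth_prime j" using fbig i by auto
      have "nth_prime j \<le> nth_prime r" by (metis i(1) j(2) le)
      moreover have "1 \<le> j" "1 \<le> r" using j(1) kr k2 by auto
      ultimately have "j \<le> r" using np_mono_le_iff[of j r] by blast
      then show "x \<in> nth_prime ` {k+1..r}" using i j by auto
    qed
    then have "card (f ` {1..m}) \<le> card (nth_prime ` {k+1..r})" by (intro card_mono) auto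
    also have "\<dots> \<le> card {k+1..r}" by (rule card_image_le) simp
    also have "card {k+1..r} = r - k" by simp
    finally have "card (f ` {1..m}) \<le> r - k" .
    moreover have "card (f ` {1..m}) = m" using card_image[OF inj] by simp
    ultimately show False unfolding m_def by linarith
  qed
  have "prime (f i)" using f[of i] i by auto
  then obtain j where j: "j \<ge> 1" "nth_prime j = f i" using np_Ex by blast
  have "j > r"
  proof (rule ccontr)
    assume "\<not> j > r"
    then have "nth_prime j \<le> nth_prime r" using np_mono_le_iff[of j r] j(1) by simp
    then show False using i(2) j(2) by simp
  qed
  then have "nth_prime (r+1) \<le> f i" using j np_mono_le_iff[of "r+1" j] by simp
  also have "f i \<le> N i" using f[of i] N2[of i] i by (simp add: dvd_imp_le)
  also have "N i < Q * m"
  proof -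
    have "Q * i \<le> Q * m" using i by simp
    moreover have "Q * i - 1 \<ge> 5" using N2[of i] i unfolding N_def by simp
    ultimately show ?thesis unfolding N_def by linarith
  qed
  finally show ?thesis unfolding Q_def m_def .
qed
lemma big:
  assumes r: "r \<ge> 11"
  shows "2 * nth_prime (r+1)^2 < (\<Prod>i\<in>{1..r}. nth_prime i)"
proof -
  define k where "k = (r - 3) div 2"
  have k4: "k \<ge> 4" and rk1: "r \<ge> 2*k+3" and rk2: "r \<le> 2*k+4" using r unfolding k_def by auto
  define a where "a = nth_prime (k+1)"
  have a: "a \<ge> 2*k+1" using np_lower[of "k+1"] unfolding a_def by simp
  define Q where "Q = (\<Prod>i\<in>{1..k}. nth_prime i)"
  define R where "R = (\<Prod>i\<in>{k+1..r}. nth_prime i)"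
  define m where "m = r - k + 1"
  have ma: "m \<le> a" using a rk2 rk1 k4 unfolding m_def by linarith
  have key': "nth_prime (r+1) < Q * m"
    using key[of k r] k4 rk1 ma unfolding Q_def m_def a_def by simp
  have Qpos: "Q > 0" unfolding Q_def using np_pos by (simp add: prod_pos)
  have Qle: "Q \<le> a^k"
  proof -
    have "Q \<le> (\<Prod>i\<in>{1..k}. a)" unfolding Q_def
    proof (rule prod_mono)
      fix i assume "i \<in> {1..k}"
      then show "0 \<le> nth_prime i \<and> nth_prime i \<le> a"
        unfolding a_def using np_mono[of i "k+1"] by simp
    qed
    then show ?thesis by simp
  qed
  have Rge: "a^(r-k) \<le> R"
  proof -
    have "(\<Prod>i\<in>{k+1..r}. a) \<le> R" unfolding R_def
    proof (rule prod_mono)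
      fix i assume "i \<in> {k+1..r}"
      then show "0 \<le> a \<and> a \<le> nth_prime i"
        unfolding a_def using np_mono_le_iff[of "k+1" i] by simp
    qed
    then show ?thesis by simp
  qed
  have a3: "a \<ge> 3" using a k4 by simp
  have "a^(k+3) \<le> a^(r-k)" using rk1 a3 by (intro power_increasing) auto
  have m2: "2 * m^2 < a^3"
  proof -
    have "m^2 \<le> a^2" using ma by (simp add: power_mono)
    then have "2 * m^2 \<le> 2 * a^2" by simp
    also have "\<dots> < 3 * a^2" using a3 by simp
    also have "\<dots> \<le> a * a^2" using a3 by (intro mult_right_mono) auto
    finally show ?thesis by (simp add: power3_eq_cube power2_eq_square)
  qed
  have "Q * (2 * m^2) \<le> a^k * (2*m^2)" using Qle by simp
  also have "\<dots> < a^k * a^3" using m2 a3 by simp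
  also have "\<dots> = a^(k+3)" by (simp add: power_add)
  also have "\<dots> \<le> R" using \<open>a^(k+3) \<le> a^(r-k)\<close> Rge by simp
  finally have QR: "Q * (2 * m^2) < R" .
  have "2 * nth_prime (r+1)^2 < 2 * (Q*m)^2" using key' by (simp add: power_strict_mono)
  also have "\<dots> = Q * (Q * (2 * m^2))" by (simp add: power2_eq_square algebra_simps)
  also have "\<dots> < Q * R" using QR Qpos by simp
  also have "Q * R = (\<Prod>i\<in>{1..r}. nth_prime i)"
    unfolding Q_def R_def using prod_split[of k r] rk1 by simp
  finally show ?thesis .
qed

lemma cond_fails:
  assumes r: "r \<ge> 5"
  shows "2 * nth_prime (r+1)^2 < primorial (nth_prime r)"
proof (cases "r \<ge> 11")
  case True then show ?thesis using big primorial_np r by simp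
next
  case False
  have "nth_prime (r+1) \<le> nth_prime 11" using False np_mono_le_iff[of "r+1" 11] by simp
  then have "nth_prime (r+1) \<le> 31" using np_11 by simp
  then have "nth_prime (r+1)^2 \<le> 31^2" by (rule power_mono) simp
  then have "2 * nth_prime (r+1)^2 < 2310" by simp
  also have "2310 = (\<Prod>i\<in>{1..5::nat}. nth_prime i)"
  proof -
    have "{1..5::nat} = {1,2,3,4,5}" by auto
    then show ?thesis using np_1 np_2 np_3 np_4 np_5 by simp
  qed
  also have "\<dots> \<le> (\<Prod>i\<in>{1..5}. nth_prime i) * (\<Prod>i\<in>{5+1..r}. nth_prime i)"
    using np_pos by (simp add: Suc_le_eq prod_pos)
  also have "\<dots> = primorial (nth_prime r)"
    using prod_split[of 5 r] primorial_np[of r] r by simp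
  finally show ?thesis .
qed

lemma gap_le:
  assumes H: "\<forall>q\<in>{a..b-c-1}. \<exists>s\<in>{q+1..q+c}. prime s"
    and W: "prime x" "prime y" "a \<le> x" "x < y" "y \<le> b" "\<forall>s\<in>{x<..<y}. \<not> prime s"
    and bc: "c < b"
  shows "max_prime_gap a b \<le> c"
proof -
  define S where "S = {q' - q | q q'. prime q \<and> prime q' \<and> a \<le> q \<and> q < q' \<and> q' \<le> b
       \<and> (\<forall>s. q < s \<and> s < q' \<longrightarrow> \<not> prime s)}"
  have "S \<subseteq> {..b}" unfolding S_def by auto
  then have fin: "finite S" by (rule finite_subset) simp
  have "y - x \<in> S" unfolding S_def
    apply (rule CollectI)
    apply (rule exI[of _ x], rule exI[of _ y])
    using W by auto
  then have ne: "S \<noteq> {}" by blast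
  have all: "\<forall>g\<in>S. g \<le> c"
  proof
    fix g assume "g \<in> S"
    obtain q q' where qq: "g = q' - q" "a \<le> q" "q < q'" "q' \<le> b"
      "\<forall>s. q < s \<and> s < q' \<longrightarrow> \<not> prime s" using \<open>g \<in> S\<close> unfolding S_def by (auto simp only: mem_Collect_eq)
    show "g \<le> c"
    proof (rule ccontr)
      assume "\<not> g \<le> c"
      then have "q + c < q'" using qq by simp
      then have "q \<in> {a..b-c-1}" using qq by simp
      then obtain s where "s \<in> {q+1..q+c}" "prime s" using H by blast
      then show False using qq \<open>q + c < q'\<close> by auto
    qed
  qed
  have "Max S \<le> c" using Max_le_iff[OF fin ne] all by blast
  then show ?thesis unfolding max_prime_gap_def S_def .
qed

theorem mainTheorem2:
  fixes r :: nat
  assumes "r \<ge> 2"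
    and "2 * (nth_prime (r+1))^2 \<ge> primorial (nth_prime r)"
  shows "max (nth_prime (r+1) - 1) (d_gap r) = 2 * nth_prime (r - 1)"
proof -
  have "r \<le> 4"
  proof (rule ccontr)
    assume "\<not> r \<le> 4"
    then have "2 * nth_prime (r+1)^2 < primorial (nth_prime r)" using cond_fails by simp
    with assms(2) show False by simp
  qed
  then have "r = 2 \<or> r = 3 \<or> r = 4" using assms(1) by auto
  then show ?thesis
  proof (elim disjE)
    assume r: "r = 2"
    have "max_prime_gap 5 25 \<le> 4" by (rule gap_le[of 5 25 4 5 7]; code_simp)
    moreover have "d_gap 2 = max_prime_gap 5 25" unfolding d_gap_def using np_3 by simp
    ultimately show ?thesis using r np_3 np_1 by simp
  next
    assume r: "r = 3"
    have "max_prime_gap 7 49 \<le> 6" by (rule gap_le[of 7 49 6 7 11]; code_simp)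
    moreover have "d_gap 3 = max_prime_gap 7 49" unfolding d_gap_def using np_4 by simp
    ultimately show ?thesis using r np_4 np_2 by simp
  next
    assume r: "r = 4"
    have "max_prime_gap 11 121 \<le> 10" by (rule gap_le[of 11 121 10 11 13]; code_simp)
    moreover have "d_gap 4 = max_prime_gap 11 121" unfolding d_gap_def using np_5 by simp
    ultimately show ?thesis using r np_5 np_3 by simp
  qed
qed

end
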